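(* Let $C>0$ and suppose the event holds that $\sum_{t=\tau_1}^{\tau_2}\mathbb E_t[M_t(g,a)]\le2\sum_{t=\tau_1}^{\tau_2}M_t(g,a)+C$ for all $g\in\mathcal G$, $a\in\mathcal A$ and $1\le\tau_1\le\tau_2\le T$. Assume $g^\star_a\in\mathcal G$ for all $a$. Then for all $a\in\mathcal A$ and $2\le k\le m\le M$: (1) $g^\star_a\in\hat{\mathcal G}_m\big(\frac{C}{2(\tau_m-1)},a\big)$; (2) for all $\beta\ge0$, $\hat{\mathcal G}_m(\beta,a)\subseteq\tilde{\mathcal G}_m\big(2\beta+\frac{C}{\tau_m-1},a\big)$; (3) for all $\beta\ge0$, $\hat{\mathcal G}_m(\beta,a)\subseteq\hat{\mathcal G}_k\big(\frac{\tau_m-1}{\tau_k-1}\beta+\frac{C}{\tau_k-1},a\big)$; (4) with $\beta_m=\frac{(M-m+1)C}{\tau_m-1}$ and $\mathcal F_m=\prod_{a}\hat{\mathcal G}_m(\beta_m,a)$ for $m\ge2$, $\mathcal F_1=\mathcal G^{\mathcal A}$: $f^\star\in\mathcal F_m$ for all $m$, and $\mathcal F_m\subseteq\mathcal F_{m-1}\subseteq\dots\subseteq\mathcal F_1$.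
   Context: Setting: $\mathcal A=\{1,\dots,K\}$, $D$ a distribution over $(x,r)\in\mathcal X\times[0,1]^K$; in rounds $t=1,\dots,T$, $(x_t,r_t)\sim D$ independently of the past, $a_t$ is chosen from $x_t$, past observations and independent randomness. $\mathcal G$ is a class of functions $\mathcal X\to[0,1]$, $g^\star_a(x)=\mathbb E[r(a)\mid x]$, $f^\star(x,a)=g^\star_a(x)$. $\mathcal J_t=\sigma((x_s,a_s,r_s)_{s<t})$, $\mathbb E_t=\mathbb E[\cdot\mid\mathcal J_t]$; $M_t(g,a)=\big((g(x_t)-r_t(a))^2-(g^\star_a(x_t)-r_t(a))^2\big)\mathbf 1\{a=a_t\}$. Epochs: $\tau_m=2^{m-1}$; $M$ is the index of the epoch (rounds $\tau_m,\dots,\tau_{m+1}-1$) containing $T$. For $m\ge2$: $\hat{\mathcal R}_m(g,a)=\frac1{\tau_m-1}\sum_{s<\tau_m}(g(x_s)-r_s(a_s))^2\mathbf 1\{a_s=a\}$, $\hat{\mathcal G}_m(\beta,a)=\{g\in\mathcal G:\hat{\mathcal R}_m(g,a)-\min_{g'\in\mathcal G}\hat{\mathcal R}_m(g',a)\le\beta\}$ (minimum assumed attained), and $\tilde{\mathcal G}_m(\beta,a)=\{g\in\mathcal G:\frac1{\tau_m-1}\sum_{t=1}^{\tau_m-1}\mathbb E_t[M_t(g,a)]\le\beta\}$. *)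

theory Defs
  imports "HOL-Probability.Probability"
begin

(* A sample path is  \<omega> :: nat \<Rightarrow> 'x \<times> (nat \<Rightarrow> real) \<times> 'u,
   \<omega> t = (x_t, r_t, \<xi>_t): context, full reward vector (actions 1..K) and the
   learner's independent internal randomness of round t.
   A learner is a policy  \<pi> t h x u  choosing the action of round t from the
   history h of past observations (x_s, a_s, r_s(a_s)), s < t, the context and
   the internal randomness. *)

type_synonym ('x,'u) path = "nat \<Rightarrow> 'x \<times> (nat \<Rightarrow> real) \<times> 'u"
type_synonym ('x,'u) policy = "nat \<Rightarrow> ('x \<times> nat \<times> real) list \<Rightarrow> 'x \<Rightarrow> 'u \<Rightarrow> nat"

definition ctx :: "('x,'u) path \<Rightarrow> nat \<Rightarrow> 'x" where
  "ctx \<omega> t = fst (\<omega> t)"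

definition rew :: "('x,'u) path \<Rightarrow> nat \<Rightarrow> nat \<Rightarrow> real" where
  "rew \<omega> t = fst (snd (\<omega> t))"

definition rnd :: "('x,'u) path \<Rightarrow> nat \<Rightarrow> 'u" where
  "rnd \<omega> t = snd (snd (\<omega> t))"

(* hist \<pi> \<omega> t = observations of rounds 1, ..., t-1 *)
fun hist :: "('x,'u) policy \<Rightarrow> ('x,'u) path \<Rightarrow> nat \<Rightarrow> ('x \<times> nat \<times> real) list" where
  "hist \<pi> \<omega> 0 = []"
| "hist \<pi> \<omega> (Suc t) =
     (if t = 0 then []
      else (let a = \<pi> t (hist \<pi> \<omega> t) (ctx \<omega> t) (rnd \<omega> t)
            in hist \<pi> \<omega> t @ [(ctx \<omega> t, a, rew \<omega> t a)]))"

definition act :: "('x,'u) policy \<Rightarrow> ('x,'u) path \<Rightarrow> nat \<Rightarrow> nat" where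
  "act \<pi> \<omega> t = \<pi> t (hist \<pi> \<omega> t) (ctx \<omega> t) (rnd \<omega> t)"

definition Mloss :: "(nat \<Rightarrow> 'x \<Rightarrow> real) \<Rightarrow> ('x \<Rightarrow> real) \<Rightarrow> nat \<Rightarrow> 'x \<Rightarrow> (nat \<Rightarrow> real) \<Rightarrow> nat \<Rightarrow> real" where
  "Mloss gs g a x r b = ((g x - r a)\<^sup>2 - (gs a x - r a)\<^sup>2) * (if a = b then 1 else 0)"

definition Mt :: "(nat \<Rightarrow> 'x \<Rightarrow> real) \<Rightarrow> ('x,'u) policy \<Rightarrow> ('x,'u) path \<Rightarrow> nat \<Rightarrow> ('x \<Rightarrow> real) \<Rightarrow> nat \<Rightarrow> real" where
  "Mt gs \<pi> \<omega> t g a = Mloss gs g a (ctx \<omega> t) (rew \<omega> t) (act \<pi> \<omega> t)"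

(* E_t[M_t(g,a)]: (regular) conditional expectation given J_t, i.e. integration over
   the fresh round-t randomness (x_t, r_t) ~ D and \<xi>_t ~ U, which are independent
   of the past, with the past observations (hence the history) held fixed. *)
definition EMt :: "('x \<times> (nat \<Rightarrow> real)) measure \<Rightarrow> 'u measure \<Rightarrow> (nat \<Rightarrow> 'x \<Rightarrow> real) \<Rightarrow>
    ('x,'u) policy \<Rightarrow> ('x,'u) path \<Rightarrow> nat \<Rightarrow> ('x \<Rightarrow> real) \<Rightarrow> nat \<Rightarrow> real" where
  "EMt D U gs \<pi> \<omega> t g a =
     (\<integral>z. Mloss gs g a (fst (fst z)) (snd (fst z)) (\<pi> t (hist \<pi> \<omega> t) (fst (fst z)) (snd z)) \<partial>(D \<Otimes>\<^sub>M U))"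

definition tau :: "nat \<Rightarrow> nat" where
  "tau m = 2 ^ (m - 1)"

definition Rhat :: "('x,'u) policy \<Rightarrow> ('x,'u) path \<Rightarrow> nat \<Rightarrow> ('x \<Rightarrow> real) \<Rightarrow> nat \<Rightarrow> real" where
  "Rhat \<pi> \<omega> m g a =
     (1 / (real (tau m) - 1)) *
     (\<Sum>s\<in>{1..<tau m}. (g (ctx \<omega> s) - rew \<omega> s (act \<pi> \<omega> s))\<^sup>2 *
                          (if act \<pi> \<omega> s = a then 1 else 0))"

(* \<hat>G_m(\<beta>,a); the minimum over G is written as an infimum (it is assumed attained) *)
definition Ghat :: "('x \<Rightarrow> real) set \<Rightarrow> ('x,'u) policy \<Rightarrow> ('x,'u) path \<Rightarrow> nat \<Rightarrow> real \<Rightarrow> nat \<Rightarrow> ('x \<Rightarrow> real) set" where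
  "Ghat G \<pi> \<omega> m \<beta> a =
     {g \<in> G. Rhat \<pi> \<omega> m g a - (INF g'\<in>G. Rhat \<pi> \<omega> m g' a) \<le> \<beta>}"

definition Gtilde :: "('x \<times> (nat \<Rightarrow> real)) measure \<Rightarrow> 'u measure \<Rightarrow> (nat \<Rightarrow> 'x \<Rightarrow> real) \<Rightarrow>
    ('x \<Rightarrow> real) set \<Rightarrow> ('x,'u) policy \<Rightarrow> ('x,'u) path \<Rightarrow> nat \<Rightarrow> real \<Rightarrow> nat \<Rightarrow> ('x \<Rightarrow> real) set" where
  "Gtilde D U gs G \<pi> \<omega> m \<beta> a =
     {g \<in> G. (1 / (real (tau m) - 1)) * (\<Sum>t\<in>{1..tau m - 1}. EMt D U gs \<pi> \<omega> t g a) \<le> \<beta>}"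

definition betam :: "nat \<Rightarrow> real \<Rightarrow> nat \<Rightarrow> real" where
  "betam M C m = real (M - m + 1) * C / (real (tau m) - 1)"

definition Fm :: "nat \<Rightarrow> real \<Rightarrow> ('x \<Rightarrow> real) set \<Rightarrow> ('x,'u) policy \<Rightarrow> ('x,'u) path \<Rightarrow> nat \<Rightarrow> nat \<Rightarrow> (nat \<Rightarrow> 'x \<Rightarrow> real) set" where
  "Fm K C G \<pi> \<omega> M m =
     (if m \<le> 1 then (\<Pi> a\<in>{1..K}. G)
      else (\<Pi> a\<in>{1..K}. Ghat G \<pi> \<omega> m (betam M C m) a))"

end

theory Submission
  imports Defs
begin

lemma bnd1: "\<bar>a::real\<bar> \<le> B \<Longrightarrow> 0 \<le> b \<Longrightarrow> b \<le> 1 \<Longrightarrow> \<bar>a * b\<bar> \<le> B"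
  using mult_left_le[of b "\<bar>a\<bar>"] by (simp add: abs_mult)

lemma cond_zero:
  fixes D :: "('x \<times> 'y) measure" and r :: "'x \<times> 'y \<Rightarrow> real"
  assumes D: "prob_space D" "sets D = sets (X \<Otimes>\<^sub>M Y)"
    and r: "r \<in> borel_measurable D" "AE z in D. 0 \<le> r z \<and> r z \<le> 1"
    and f: "f \<in> borel_measurable X" "\<forall>x\<in>space X. 0 \<le> f x \<and> f x \<le> 1"
    and cond: "\<And>A. A \<in> sets X \<Longrightarrow> (\<integral>z. indicator A (fst z) * r z \<partial>D) = (\<integral>z. indicator A (fst z) * f (fst z) \<partial>D)"
    and psi: "\<psi> \<in> borel_measurable X" "\<forall>x\<in>space X. \<bar>\<psi> x\<bar> \<le> B"
  shows "(\<integral>z. \<psi> (fst z) * (f (fst z) - r z) \<partial>D) = 0"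
proof -
  interpret prob_space D by fact
  have fstm[measurable]: "fst \<in> measurable D X"
    using measurable_cong_sets[OF D(2) refl] measurable_fst by blast
  have sp: "space D = space (X \<Otimes>\<^sub>M Y)" using sets_eq_imp_space_eq[OF D(2)] .
  have fsp: "z \<in> space D \<Longrightarrow> fst z \<in> space X" for z using sp by (auto simp: space_pair_measure)
  note [measurable] = r(1) f(1) psi(1)
  define N1 where "N1 = distr (density D (\<lambda>z. ennreal (r z))) X fst"
  define N2 where "N2 = distr (density D (\<lambda>z. ennreal (f (fst z)))) X fst"
  have "N1 = N2"
  proof (rule measure_eqI)
    show "sets N1 = sets N2" by (simp add: N1_def N2_def)
    fix A assume "A \<in> sets N1"
    then have A[measurable]: "A \<in> sets X" by (simp add: N1_def)
    have i1: "integrable D (\<lambda>z. indicator A (fst z) * r z)"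
      by (rule integrable_const_bound[where B=1]) (use r(2) in \<open>auto simp: indicator_def\<close>)
    have i2: "integrable D (\<lambda>z. indicator A (fst z) * f (fst z))"
      by (rule integrable_const_bound[where B=1]) (use f(2) fsp in \<open>auto simp: indicator_def\<close>)
    have "emeasure N1 A = emeasure (density D (\<lambda>z. ennreal (r z))) (fst -` A \<inter> space D)"
      unfolding N1_def by (subst emeasure_distr) auto
    also have "\<dots> = (\<integral>\<^sup>+z. ennreal (r z) * indicator (fst -` A \<inter> space D) z \<partial>D)"
      by (subst emeasure_density) (auto intro: measurable_sets)
    also have "\<dots> = (\<integral>\<^sup>+z. ennreal (indicator A (fst z) * r z) \<partial>D)"
      by (rule nn_integral_cong) (auto simp: indicator_def)
    also have "\<dots> = ennreal (\<integral>z. indicator A (fst z) * r z \<partial>D)"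
      by (rule nn_integral_eq_integral[OF i1]) (use r(2) in auto)
    also have "\<dots> = ennreal (\<integral>z. indicator A (fst z) * f (fst z) \<partial>D)" using cond[OF A] by simp
    also have "\<dots> = (\<integral>\<^sup>+z. ennreal (indicator A (fst z) * f (fst z)) \<partial>D)"
      by (rule nn_integral_eq_integral[OF i2, symmetric]) (use f(2) fsp in auto)
    also have "\<dots> = (\<integral>\<^sup>+z. ennreal (f (fst z)) * indicator (fst -` A \<inter> space D) z \<partial>D)"
      by (rule nn_integral_cong) (auto simp: indicator_def)
    also have "\<dots> = emeasure (density D (\<lambda>z. ennreal (f (fst z)))) (fst -` A \<inter> space D)"
      by (subst emeasure_density) (auto intro: measurable_sets)
    also have "\<dots> = emeasure N2 A"
      unfolding N2_def by (subst emeasure_distr) auto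
    finally show "emeasure N1 A = emeasure N2 A" .
  qed
  have e1a: "integral\<^sup>L (density D (\<lambda>z. ennreal (r z))) (\<lambda>z. \<psi> (fst z)) = (\<integral>z. r z *\<^sub>R \<psi> (fst z) \<partial>D)"
    by (rule integral_density) (measurable, use r(2) in auto)
  have e1: "integral\<^sup>L N1 \<psi> = (\<integral>z. r z * \<psi> (fst z) \<partial>D)"
    unfolding N1_def by (subst integral_distr) (auto simp: e1a)
  have e2: "integral\<^sup>L N2 \<psi> = (\<integral>z. f (fst z) * \<psi> (fst z) \<partial>D)"
    unfolding N2_def by (subst integral_distr) (auto simp: integral_density f fsp)
  have j1: "integrable D (\<lambda>z. \<psi> (fst z) * f (fst z))"
    by (rule integrable_const_bound[where B=B])
       (use f(2) psi(2) fsp in \<open>auto intro!: bnd1 AE_I2\<close>)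
  have j2: "integrable D (\<lambda>z. \<psi> (fst z) * r z)"
  proof (rule integrable_const_bound[where B=B])
    show "AE z in D. norm (\<psi> (fst z) * r z) \<le> B"
      using r(2) AE_space
    proof eventually_elim
      case (elim z)
      then have "\<bar>\<psi> (fst z)\<bar> \<le> B" using psi(2) fsp by auto
      then show ?case using elim by (auto intro!: bnd1)
    qed
  qed measurable
  have "(\<integral>z. \<psi> (fst z) * (f (fst z) - r z) \<partial>D) = (\<integral>z. \<psi> (fst z) * f (fst z) \<partial>D) - (\<integral>z. \<psi> (fst z) * r z \<partial>D)"
    using j1 j2 by (simp add: right_diff_distrib)
  also have "\<dots> = 0" using e1 e2 \<open>N1 = N2\<close> by (simp add: mult.commute)
  finally show ?thesis .
qed

lemma bnd2: "(a::real) \<in> {0..1} \<Longrightarrow> b \<in> {0..1} \<Longrightarrow> c \<in> {0..1} \<Longrightarrow> \<bar>(a - c)\<^sup>2 - (b - c)\<^sup>2\<bar> \<le> 1"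
proof -
  assume h: "a \<in> {0..1}" "b \<in> {0..1}" "c \<in> {0..1}"
  have "(a - c)\<^sup>2 \<le> 1" "(b - c)\<^sup>2 \<le> 1" using h by (auto simp: abs_le_iff intro!: power_le_one_iff[THEN iffD2] abs_square_le_1[THEN iffD2])
  then show ?thesis by (simp add: abs_le_iff) (smt (verit) zero_le_power2)
qed

lemma EMt_nonneg:
  fixes D :: "('x \<times> (nat \<Rightarrow> real)) measure" and U :: "'u measure"
  assumes D: "prob_space D" "sets D = sets (X \<Otimes>\<^sub>M (\<Pi>\<^sub>M i\<in>UNIV. borel))"
    and Drew: "AE z in D. snd z a \<in> {0..1}"
    and U: "prob_space U"
    and g: "g \<in> borel_measurable X" "\<forall>x\<in>space X. g x \<in> {0..1}"
    and gsa: "gs a \<in> borel_measurable X" "\<forall>x\<in>space X. gs a x \<in> {0..1}"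
    and cond: "\<And>A. A \<in> sets X \<Longrightarrow>
        (\<integral>z. indicator A (fst z) * snd z a \<partial>D) = (\<integral>z. indicator A (fst z) * gs a (fst z) \<partial>D)"
    and pim: "(\<lambda>(x, u). \<pi> t H x u) \<in> measurable (X \<Otimes>\<^sub>M U) (count_space UNIV)"
    and H: "H = hist \<pi> \<omega> t"
  shows "0 \<le> EMt D U gs \<pi> \<omega> t g a"
proof -
  interpret Dp: prob_space D by fact
  interpret Up: prob_space U by fact
  interpret P: pair_prob_space D U by standard
  have fstm[measurable]: "fst \<in> measurable D X"
    using measurable_cong_sets[OF D(2) refl] measurable_fst by blast
  have rm[measurable]: "(\<lambda>w. snd w a) \<in> borel_measurable D"
  proof -
    have "(\<lambda>w. snd w a) \<in> borel_measurable (X \<Otimes>\<^sub>M (\<Pi>\<^sub>M i\<in>UNIV. (borel::real measure)))" by measurable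
    then show ?thesis using measurable_cong_sets[OF D(2) refl] by blast
  qed
  have sp: "space D = space (X \<Otimes>\<^sub>M (\<Pi>\<^sub>M i\<in>UNIV. borel))" using sets_eq_imp_space_eq[OF D(2)] .
  have fsp: "z \<in> space D \<Longrightarrow> fst z \<in> space X" for z using sp by (auto simp: space_pair_measure)
  note [measurable] = g(1) gsa(1)
  have "(\<lambda>z. (fst (fst z), snd z)) \<in> measurable (D \<Otimes>\<^sub>M U) (X \<Otimes>\<^sub>M U)" by measurable
  from measurable_compose[OF this pim]
  have pm[measurable]: "(\<lambda>z. \<pi> t H (fst (fst z)) (snd z)) \<in> measurable (D \<Otimes>\<^sub>M U) (count_space UNIV)"
    by simp
  define \<Phi> where "\<Phi> w u = Mloss gs g a (fst w) (snd w) (\<pi> t H (fst w) u)" for w u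
  have E: "EMt D U gs \<pi> \<omega> t g a = integral\<^sup>L (D \<Otimes>\<^sub>M U) (case_prod \<Phi>)"
    unfolding EMt_def \<Phi>_def H by (simp add: split_beta')
  have AEr: "AE z in D \<Otimes>\<^sub>M U. snd (fst z) a \<in> {0..1}"
    by (rule AE_distrD[OF measurable_fst]) (subst Up.distr_pair_fst, rule Drew)
  have int: "integrable (D \<Otimes>\<^sub>M U) (case_prod \<Phi>)"
  proof (rule P.integrable_const_bound[where B=1])
    show "AE z in D \<Otimes>\<^sub>M U. norm (case_prod \<Phi> z) \<le> 1"
      using AEr AE_space
    proof eventually_elim
      case (elim z)
      then have "fst (fst z) \<in> space X" using fsp by (auto simp: space_pair_measure)
      then show ?case using elim g(2) gsa(2) bnd2[of "g (fst (fst z))" "gs a (fst (fst z))" "snd (fst z) a"]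
        by (auto simp: \<Phi>_def Mloss_def split_beta')
    qed
  qed (unfold \<Phi>_def Mloss_def split_beta', measurable)
  have "integral\<^sup>L (D \<Otimes>\<^sub>M U) (case_prod \<Phi>) = (\<integral>u. (\<integral>w. \<Phi> w u \<partial>D) \<partial>U)"
    using P.integral_snd[OF int] by simp
  moreover have "0 \<le> (\<integral>u. (\<integral>w. \<Phi> w u \<partial>D) \<partial>U)"
  proof (rule Bochner_Integration.integral_nonneg)
    fix u assume u: "u \<in> space U"
    have "(\<lambda>x. (x, u)) \<in> measurable X (X \<Otimes>\<^sub>M U)" using u by measurable
    from measurable_compose[OF this pim]
    have pu: "(\<lambda>x. \<pi> t H x u) \<in> measurable X (count_space UNIV)" by simp
    have pu'[measurable]: "(\<lambda>w. \<pi> t H (fst w) u) \<in> measurable D (count_space UNIV)"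
      using measurable_compose[OF fstm pu] .
    define h where "h x = (if \<pi> t H x u = a then 1 else 0::real)" for x
    have hm[measurable]: "h \<in> borel_measurable X" unfolding h_def using pu by measurable
    define \<psi> where "\<psi> x = (g x - gs a x) * h x" for x
    have eq: "\<Phi> w u = (g (fst w) - gs a (fst w))\<^sup>2 * h (fst w) + 2 * (\<psi> (fst w) * (gs a (fst w) - snd w a))" for w
      unfolding \<Phi>_def Mloss_def \<psi>_def h_def by (auto simp: power2_eq_square algebra_simps)
    have pb: "\<bar>(g x - gs a x)\<^sup>2 * h x\<bar> \<le> 1" if x: "x \<in> space X" for x
    proof -
      have "0 \<le> g x" "g x \<le> 1" "0 \<le> gs a x" "gs a x \<le> 1" using g(2) gsa(2) x by auto
      then have "\<bar>g x - gs a x\<bar> \<le> 1" by (simp add: abs_le_iff)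
      then have "(g x - gs a x)\<^sup>2 \<le> 1" by (simp add: abs_square_le_1)
      then show ?thesis by (simp add: h_def)
    qed
    have pp: "\<bar>\<psi> x\<bar> \<le> 1" if x: "x \<in> space X" for x
    proof -
      have "0 \<le> g x" "g x \<le> 1" "0 \<le> gs a x" "gs a x \<le> 1" using g(2) gsa(2) x by auto
      then have "\<bar>g x - gs a x\<bar> \<le> 1" by (simp add: abs_le_iff)
      then show ?thesis by (simp add: h_def \<psi>_def abs_mult)
    qed
    have i1: "integrable D (\<lambda>w. (g (fst w) - gs a (fst w))\<^sup>2 * h (fst w))"
      by (rule Dp.integrable_const_bound[where B=1])
         (use pb fsp in \<open>auto intro!: AE_I2\<close>)
    have i2: "integrable D (\<lambda>w. \<psi> (fst w) * (gs a (fst w) - snd w a))"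
    proof (rule Dp.integrable_const_bound[where B=1])
      show "AE w in D. norm (\<psi> (fst w) * (gs a (fst w) - snd w a)) \<le> 1"
        using Drew AE_space
      proof eventually_elim
        case (elim w)
        then have "fst w \<in> space X" using fsp by auto
        then have 1: "\<bar>\<psi> (fst w)\<bar> \<le> 1" and "0 \<le> gs a (fst w)" "gs a (fst w) \<le> 1"
          using pp gsa(2) by auto
        then have 2: "\<bar>gs a (fst w) - snd w a\<bar> \<le> 1" using elim by (simp add: abs_le_iff)
        show ?case using mult_le_one[OF 1 abs_ge_zero 2] by (simp add: abs_mult)
      qed
    qed (unfold \<psi>_def, measurable)
    have z: "(\<integral>w. \<psi> (fst w) * (gs a (fst w) - snd w a) \<partial>D) = 0"
    proof (rule cond_zero[OF D rm _ gsa(1) _ cond])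
      show "AE z in D. 0 \<le> snd z a \<and> snd z a \<le> 1" using Drew by auto
      show "\<forall>x\<in>space X. 0 \<le> gs a x \<and> gs a x \<le> 1" using gsa(2) by auto
      show "\<psi> \<in> borel_measurable X" unfolding \<psi>_def by measurable
      show "\<forall>x\<in>space X. \<bar>\<psi> x\<bar> \<le> 1" using pp by auto
    qed
    have "(\<integral>w. \<Phi> w u \<partial>D) = (\<integral>w. (g (fst w) - gs a (fst w))\<^sup>2 * h (fst w) \<partial>D) + 2 * (\<integral>w. \<psi> (fst w) * (gs a (fst w) - snd w a) \<partial>D)"
      unfolding eq using i1 i2 by simp
    also have "\<dots> = (\<integral>w. (g (fst w) - gs a (fst w))\<^sup>2 * h (fst w) \<partial>D)" unfolding z by simp
    also have "\<dots> \<ge> 0" by (auto intro!: integral_nonneg simp: h_def)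
    finally show "0 \<le> (\<integral>w. \<Phi> w u \<partial>D)" .
  qed
  ultimately show ?thesis using E by simp
qed


lemma Rhat_diff:
  "Rhat \<pi> \<omega> m g a - Rhat \<pi> \<omega> m (gs a) a =
     (\<Sum>s\<in>{1..<tau m}. Mt gs \<pi> \<omega> s g a) / (real (tau m) - 1)"
proof -
  have "(\<Sum>s\<in>{1..<tau m}. (g (ctx \<omega> s) - rew \<omega> s (act \<pi> \<omega> s))\<^sup>2 * (if act \<pi> \<omega> s = a then 1 else 0))
      - (\<Sum>s\<in>{1..<tau m}. (gs a (ctx \<omega> s) - rew \<omega> s (act \<pi> \<omega> s))\<^sup>2 * (if act \<pi> \<omega> s = a then 1 else 0))
      = (\<Sum>s\<in>{1..<tau m}. Mt gs \<pi> \<omega> s g a)"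
    unfolding sum_subtractf[symmetric]
    by (rule sum.cong) (auto simp: Mt_def Mloss_def)
  then show ?thesis unfolding Rhat_def by (simp add: diff_divide_distrib[symmetric])
qed

lemma tau_ge1: "1 \<le> tau m" unfolding tau_def by simp

lemma tau_ge2: "2 \<le> m \<Longrightarrow> 2 \<le> tau m"
  unfolding tau_def using power_increasing[of 1 "m - 1" "2::nat"] by simp

lemma tau_mono: "k \<le> m \<Longrightarrow> tau k \<le> tau m"
  unfolding tau_def by (rule power_increasing) auto

theorem mainTheorem10:
  fixes K T M :: nat and C :: real
    and X :: "'x measure" and U :: "'u measure"
    and D :: "('x \<times> (nat \<Rightarrow> real)) measure"
    and G :: "('x \<Rightarrow> real) set" and gs :: "nat \<Rightarrow> 'x \<Rightarrow> real"
    and \<pi> :: "('x,'u) policy" and \<omega> :: "('x,'u) path"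
  assumes K: "K \<ge> 1"
    and T: "T \<ge> 1"
    and M: "M \<ge> 1" "tau M \<le> T" "T < tau (Suc M)"
    and C: "C > 0"
    \<comment> \<open>the distribution D of (x, r) and the internal randomness distribution U\<close>
    and D: "prob_space D" "sets D = sets (X \<Otimes>\<^sub>M (\<Pi>\<^sub>M i\<in>UNIV. borel))"
    and D_rew: "AE z in D. \<forall>a\<in>{1..K}. snd z a \<in> {0..1}"
    and U: "prob_space U"
    \<comment> \<open>the function class\<close>
    and G: "\<And>g. g \<in> G \<Longrightarrow> g \<in> borel_measurable X \<and> (\<forall>x\<in>space X. g x \<in> {0..1})"
    \<comment> \<open>g*_a(x) = E[r(a) | x] under D\<close>
    and gs_meas: "\<And>a. a \<in> {1..K} \<Longrightarrow> gs a \<in> borel_measurable X"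
    and gs_cond: "\<And>a A. a \<in> {1..K} \<Longrightarrow> A \<in> sets X \<Longrightarrow>
        (\<integral>z. indicator A (fst z) * snd z a \<partial>D) = (\<integral>z. indicator A (fst z) * gs a (fst z) \<partial>D)"
    and gs_in: "\<And>a. a \<in> {1..K} \<Longrightarrow> gs a \<in> G"
    \<comment> \<open>the learner\<close>
    and \<pi>_meas: "\<And>t h. (\<lambda>(x, u). \<pi> t h x u) \<in> measurable (X \<Otimes>\<^sub>M U) (count_space UNIV)"
    and \<pi>_range: "\<And>t h x u. \<pi> t h x u \<in> {1..K}"
    \<comment> \<open>the realised path\<close>
    and path: "\<And>t. ctx \<omega> t \<in> space X \<and> rnd \<omega> t \<in> space U \<and> (\<forall>a\<in>{1..K}. rew \<omega> t a \<in> {0..1})"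
    \<comment> \<open>the minimum defining \<hat>G_m is attained\<close>
    and min_att: "\<And>m a. 2 \<le> m \<Longrightarrow> m \<le> M \<Longrightarrow> a \<in> {1..K} \<Longrightarrow>
        \<exists>g0\<in>G. \<forall>g\<in>G. Rhat \<pi> \<omega> m g0 a \<le> Rhat \<pi> \<omega> m g a"
    \<comment> \<open>the event\<close>
    and event: "\<And>g a t1 t2. g \<in> G \<Longrightarrow> a \<in> {1..K} \<Longrightarrow> 1 \<le> t1 \<Longrightarrow> t1 \<le> t2 \<Longrightarrow> t2 \<le> T \<Longrightarrow>
        (\<Sum>t\<in>{t1..t2}. EMt D U gs \<pi> \<omega> t g a) \<le> 2 * (\<Sum>t\<in>{t1..t2}. Mt gs \<pi> \<omega> t g a) + C"
  shows "(\<forall>a\<in>{1..K}. \<forall>k m. 2 \<le> k \<and> k \<le> m \<and> m \<le> M \<longrightarrow>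
            gs a \<in> Ghat G \<pi> \<omega> m (C / (2 * (real (tau m) - 1))) a
          \<and> (\<forall>\<beta>\<ge>0. Ghat G \<pi> \<omega> m \<beta> a
                \<subseteq> Gtilde D U gs G \<pi> \<omega> m (2 * \<beta> + C / (real (tau m) - 1)) a)
          \<and> (\<forall>\<beta>\<ge>0. Ghat G \<pi> \<omega> m \<beta> a
                \<subseteq> Ghat G \<pi> \<omega> k ((real (tau m) - 1) / (real (tau k) - 1) * \<beta> + C / (real (tau k) - 1)) a))
       \<and> (\<forall>m. 1 \<le> m \<and> m \<le> M \<longrightarrow> gs \<in> Fm K C G \<pi> \<omega> M m)
       \<and> (\<forall>m. 2 \<le> m \<and> m \<le> M \<longrightarrow> Fm K C G \<pi> \<omega> M m \<subseteq> Fm K C G \<pi> \<omega> M (m - 1))"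
proof -
  have EMnn: "0 \<le> EMt D U gs \<pi> \<omega> t g a" if g: "g \<in> G" and a: "a \<in> {1..K}" for g a t
  proof (rule EMt_nonneg[OF D _ U _ _ _ _ _ \<pi>_meas refl])
    show "AE z in D. snd z a \<in> {0..1}" using D_rew by eventually_elim (use a in auto)
    show "g \<in> borel_measurable X" "\<forall>x\<in>space X. g x \<in> {0..1}" using G[OF g] by auto
    show "gs a \<in> borel_measurable X" using gs_meas a .
    show "\<forall>x\<in>space X. gs a x \<in> {0..1}" using G[OF gs_in[OF a]] by auto
    show "(\<integral>z. indicator A (fst z) * snd z a \<partial>D) = (\<integral>z. indicator A (fst z) * gs a (fst z) \<partial>D)"
      if "A \<in> sets X" for A using gs_cond a that by auto
  qed
  have low: "- C / 2 \<le> (\<Sum>t\<in>{t1..t2}. Mt gs \<pi> \<omega> t g a)"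
    if "g \<in> G" "a \<in> {1..K}" "1 \<le> t1" "t1 \<le> t2" "t2 \<le> T" for g a t1 t2
  proof -
    have "0 \<le> (\<Sum>t\<in>{t1..t2}. EMt D U gs \<pi> \<omega> t g a)" by (rule sum_nonneg) (use EMnn that in auto)
    with event[OF that] show ?thesis by linarith
  qed
  have tauT: "tau m \<le> T" if "m \<le> M" for m using tau_mono[OF that] M(2) by linarith
  have ival: "{1..<tau m} = {1..tau m - 1}" for m using tau_ge1[of m] by auto
  define S where "S m g a = (\<Sum>s\<in>{1..<tau m}. Mt gs \<pi> \<omega> s g a)" for m g a
  define N where "N m = real (tau m) - 1" for m
  have Npos: "N m > 0" if "2 \<le> m" for m using tau_ge2[OF that] unfolding N_def by simp
  have RD: "Rhat \<pi> \<omega> m g a - Rhat \<pi> \<omega> m (gs a) a = S m g a / N m" for m g a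
    unfolding S_def N_def by (rule Rhat_diff)
  have lowS: "- C / 2 \<le> S m g a" if "g \<in> G" "a \<in> {1..K}" "2 \<le> m" "m \<le> M" for g a m
    unfolding S_def ival using low[OF that(1,2), of 1 "tau m - 1"] tau_ge2[OF that(3)] tauT[OF that(4)] by simp
  have lowS2: "- C / 2 \<le> (\<Sum>s\<in>{tau k..<tau m}. Mt gs \<pi> \<omega> s g a)"
    if "g \<in> G" "a \<in> {1..K}" "2 \<le> k" "k \<le> m" "m \<le> M" for g a k m
  proof (cases "tau k < tau m")
    case True
    then have "{tau k..<tau m} = {tau k..tau m - 1}" by auto
    then show ?thesis using low[OF that(1,2), of "tau k" "tau m - 1"] True tau_ge1[of k] tauT[OF that(5)] by simp
  next
    case False
    then show ?thesis using C by simp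
  qed
  have minf: "\<exists>g0\<in>G. (INF g'\<in>G. Rhat \<pi> \<omega> m g' a) = Rhat \<pi> \<omega> m g0 a \<and> (\<forall>g\<in>G. Rhat \<pi> \<omega> m g0 a \<le> Rhat \<pi> \<omega> m g a)"
    if mm: "2 \<le> m" "m \<le> M" "a \<in> {1..K}" for m a
  proof -
    obtain g0 where g0: "g0 \<in> G" "\<forall>g\<in>G. Rhat \<pi> \<omega> m g0 a \<le> Rhat \<pi> \<omega> m g a" using min_att[OF mm] by blast
    have "(INF g'\<in>G. Rhat \<pi> \<omega> m g' a) = Rhat \<pi> \<omega> m g0 a"
      by (rule cInf_eq_minimum) (use g0 in auto)
    then show ?thesis using g0 by blast
  qed
  have P1: "gs a \<in> Ghat G \<pi> \<omega> m (C / (2 * (real (tau m) - 1))) a"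
    if a: "a \<in> {1..K}" and m: "2 \<le> m" "m \<le> M" for a m
  proof -
    obtain g0 where g0: "g0 \<in> G" "(INF g'\<in>G. Rhat \<pi> \<omega> m g' a) = Rhat \<pi> \<omega> m g0 a"
      using minf[OF m a] by blast
    have "- S m g0 a \<le> C / 2" using lowS[OF g0(1) a m] by linarith
    then have "- S m g0 a / N m \<le> (C / 2) / N m" by (rule divide_right_mono) (use Npos[OF m(1)] in simp)
    moreover have "Rhat \<pi> \<omega> m (gs a) a - Rhat \<pi> \<omega> m g0 a = - S m g0 a / N m" using RD[of m g0 a] by simp
    ultimately show ?thesis using gs_in[OF a] g0 unfolding Ghat_def N_def by simp
  qed
  have SmB: "S m g a \<le> \<beta> * N m" if a: "a \<in> {1..K}" and m: "2 \<le> m" "m \<le> M"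
    and g: "g \<in> Ghat G \<pi> \<omega> m \<beta> a" for a m g \<beta>
  proof -
    obtain g0 where g0: "g0 \<in> G" "(INF g'\<in>G. Rhat \<pi> \<omega> m g' a) = Rhat \<pi> \<omega> m g0 a"
      "\<forall>g\<in>G. Rhat \<pi> \<omega> m g0 a \<le> Rhat \<pi> \<omega> m g a"
      using minf[OF m a] by blast
    have "Rhat \<pi> \<omega> m g a - Rhat \<pi> \<omega> m g0 a \<le> \<beta>" using g g0(2) unfolding Ghat_def by simp
    moreover have "Rhat \<pi> \<omega> m g0 a \<le> Rhat \<pi> \<omega> m (gs a) a" using g0(3) gs_in[OF a] by blast
    ultimately have "S m g a / N m \<le> \<beta>" using RD[of m g a] by linarith
    then show ?thesis using Npos[OF m(1)] by (simp add: divide_le_eq)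
  qed
  have P2: "g \<in> Gtilde D U gs G \<pi> \<omega> m (2 * \<beta> + C / (real (tau m) - 1)) a"
    if a: "a \<in> {1..K}" and m: "2 \<le> m" "m \<le> M" and g: "g \<in> Ghat G \<pi> \<omega> m \<beta> a" for a m g \<beta>
  proof -
    have gG: "g \<in> G" using g unfolding Ghat_def by auto
    have "(\<Sum>t\<in>{1..tau m - 1}. EMt D U gs \<pi> \<omega> t g a) \<le> 2 * S m g a + C"
      unfolding S_def ival using event[OF gG a, of 1 "tau m - 1"] tau_ge2[OF m(1)] tauT[OF m(2)] by simp
    also have "\<dots> \<le> 2 * (\<beta> * N m) + C" using SmB[OF a m g] by simp
    finally have "(1 / N m) * (\<Sum>t\<in>{1..tau m - 1}. EMt D U gs \<pi> \<omega> t g a) \<le> (1 / N m) * (2 * (\<beta> * N m) + C)"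
      using Npos[OF m(1)] by (intro mult_left_mono) auto
    also have "\<dots> = 2 * \<beta> + C / N m" using Npos[OF m(1)] by (simp add: field_simps)
    finally show ?thesis using gG unfolding Gtilde_def N_def by simp
  qed
  have P3: "g \<in> Ghat G \<pi> \<omega> k ((real (tau m) - 1) / (real (tau k) - 1) * \<beta> + C / (real (tau k) - 1)) a"
    if a: "a \<in> {1..K}" and km: "2 \<le> k" "k \<le> m" "m \<le> M" and g: "g \<in> Ghat G \<pi> \<omega> m \<beta> a" for a k m g \<beta>
  proof -
    have gG: "g \<in> G" using g unfolding Ghat_def by auto
    have m: "2 \<le> m" "m \<le> M" using km by auto
    have k: "2 \<le> k" "k \<le> M" using km by auto
    obtain g0 where g0: "g0 \<in> G" "(INF g'\<in>G. Rhat \<pi> \<omega> k g' a) = Rhat \<pi> \<omega> k g0 a"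
      using minf[OF k a] by blast
    have split: "S k g a + (\<Sum>s\<in>{tau k..<tau m}. Mt gs \<pi> \<omega> s g a) = S m g a"
      unfolding S_def by (rule sum.atLeastLessThan_concat) (use tau_ge1[of k] tau_mono[OF km(2)] in auto)
    have "S k g a - S k g0 a \<le> \<beta> * N m + C"
      using split SmB[OF a m g] lowS2[OF gG a km] lowS[OF g0(1) a k] by linarith
    moreover have "Rhat \<pi> \<omega> k g a - Rhat \<pi> \<omega> k g0 a = (S k g a - S k g0 a) / N k"
      using RD[of k g a] RD[of k g0 a] by (simp add: diff_divide_distrib)
    ultimately have "Rhat \<pi> \<omega> k g a - Rhat \<pi> \<omega> k g0 a \<le> (\<beta> * N m + C) / N k"
      using Npos[OF k(1)] by (simp add: divide_right_mono)
    also have "\<dots> = N m / N k * \<beta> + C / N k" by (simp add: add_divide_distrib)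
    finally show ?thesis using gG g0(2) unfolding Ghat_def N_def by simp
  qed
  have Gmono: "Ghat G \<pi> \<omega> m \<beta> a \<subseteq> Ghat G \<pi> \<omega> m \<beta>' a" if "\<beta> \<le> \<beta>'" for m \<beta> \<beta>' a
    using that unfolding Ghat_def by auto
  have F1: "gs \<in> Fm K C G \<pi> \<omega> M m" if "1 \<le> m" "m \<le> M" for m
  proof (cases "m \<le> 1")
    case True then show ?thesis unfolding Fm_def using gs_in by auto
  next
    case False
    then have m: "2 \<le> m" "m \<le> M" using that by auto
    have "C / (2 * (real (tau m) - 1)) \<le> betam M C m"
    proof -
      have "C / (2 * N m) \<le> C / N m" using Npos[OF m(1)] C by (simp add: frac_le)
      also have "\<dots> \<le> real (M - m + 1) * C / N m" using Npos[OF m(1)] C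
        by (intro divide_right_mono) auto
      finally show ?thesis unfolding betam_def N_def .
    qed
    then have "gs a \<in> Ghat G \<pi> \<omega> m (betam M C m) a" if a: "a \<in> {1..K}" for a
      using P1[OF a m] Gmono by blast
    then show ?thesis unfolding Fm_def using False by auto
  qed
  have F2: "Fm K C G \<pi> \<omega> M m \<subseteq> Fm K C G \<pi> \<omega> M (m - 1)" if m: "2 \<le> m" "m \<le> M" for m
  proof (cases "m - 1 \<le> 1")
    case True
    then show ?thesis using m unfolding Fm_def Ghat_def by auto
  next
    case False
    have b: "N m / N (m - 1) * betam M C m + C / N (m - 1) = betam M C (m - 1)"
    proof -
      have "real (M - (m - 1) + 1) = real (M - m + 1) + 1" using m False by auto
      then show ?thesis unfolding betam_def N_def[symmetric]
        using Npos[OF m(1)] Npos[of "m - 1"] False by (simp add: field_simps)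
    qed
    show ?thesis
    proof
      fix f assume f: "f \<in> Fm K C G \<pi> \<omega> M m"
      have "f a \<in> Ghat G \<pi> \<omega> (m - 1) (betam M C (m - 1)) a" if a: "a \<in> {1..K}" for a
      proof -
        have "f a \<in> Ghat G \<pi> \<omega> m (betam M C m) a" using f a m unfolding Fm_def by auto
        from P3[OF a _ _ m(2) this, of "m - 1"] False
        show ?thesis using b unfolding N_def by simp
      qed
      then show "f \<in> Fm K C G \<pi> \<omega> M (m - 1)" using False unfolding Fm_def by auto
    qed
  qed
  show ?thesis
  proof (intro conjI ballI allI impI)
    fix a k m assume a: "a \<in> {1..K}" and km: "2 \<le> k \<and> k \<le> m \<and> m \<le> M"
    then have m: "2 \<le> m" "m \<le> M" by auto
    show "gs a \<in> Ghat G \<pi> \<omega> m (C / (2 * (real (tau m) - 1))) a" using P1[OF a m] .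
    fix \<beta> :: real
    show "Ghat G \<pi> \<omega> m \<beta> a \<subseteq> Gtilde D U gs G \<pi> \<omega> m (2 * \<beta> + C / (real (tau m) - 1)) a"
      using P2[OF a m] by blast
    show "Ghat G \<pi> \<omega> m \<beta> a
                \<subseteq> Ghat G \<pi> \<omega> k ((real (tau m) - 1) / (real (tau k) - 1) * \<beta> + C / (real (tau k) - 1)) a"
      using P3[OF a] km by blast
  next
    fix m assume "1 \<le> m \<and> m \<le> M" then show "gs \<in> Fm K C G \<pi> \<omega> M m" using F1 by auto
  next
    fix m assume "2 \<le> m \<and> m \<le> M" then show "Fm K C G \<pi> \<omega> M m \<subseteq> Fm K C G \<pi> \<omega> M (m - 1)" using F2 by auto
  qed
qed

end
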